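(* Assume the stationary generator setting described in the context, and let $k\ge1$. Then: (i) $H(R_0\mid R_k,\overleftrightarrow Y)=H(R_k\mid R_0,\overleftrightarrow Y)$; (ii) $I(R_0;R_k;Y_{1:k}\mid\overleftarrow Y)+I(R_0;Y_{1:k}\mid\overleftarrow Y,R_k)+I(R_0;\overrightarrow Y\mid\overleftarrow Y,Y_{1:k},R_k)=I(R_k;\overrightarrow Y\mid R_0,\overleftarrow Y,Y_{1:k})$; (iii) $I(\overleftarrow Y;R_0\mid R_k,\overrightarrow Y)+I(\overleftarrow Y;R_0;Y_{1:k}\mid R_k)=I(R_0;R_k;Y_{1:k}\mid\overleftarrow Y)+I(R_k;Y_{1:k}\mid R_0,\overleftarrow Y)$.
   Context: Stationary generator setting: $\mathcal Y$ and $\mathcal R$ finite sets; $(Y_t,R_t)_{t\in\mathbb Z}$ jointly stationary (shift-invariant) with $Y_t\in\mathcal Y$, $R_t\in\mathcal R$ (memory after $Y_t$ is produced). Generator condition: for every $t$, $\big((Y_s)_{s\le t},(R_s)_{s<t}\big)$ is conditionally independent of $\big((Y_s)_{s>t},(R_s)_{s>t}\big)$ given $R_t$. Notation: $Y_{a:b}=(Y_a,\dots,Y_b)$, $\overleftarrow Y=(\dots,Y_{-1},Y_0)$, $\overrightarrow Y=(Y_1,Y_2,\dots)$, $\overleftrightarrow Y=(Y_t)_{t\in\mathbb Z}$; information quantities involving infinite sequences are limits of finite-window quantities. Conditional three-way mutual information: $I(A;B;C\mid D):=I(A;B\mid D)-I(A;B\mid C,D)$. *)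

theory Defs
  imports "HOL-Probability.Probability"
begin

definition pr :: "'a measure \<Rightarrow> ('a \<Rightarrow> 'b) \<Rightarrow> 'b \<Rightarrow> real" where
  "pr M X x = measure M {\<omega> \<in> space M. X \<omega> = x}"

definition cond_entropy :: "'a measure \<Rightarrow> ('a \<Rightarrow> 'b) \<Rightarrow> ('a \<Rightarrow> 'c) \<Rightarrow> real" where
  "cond_entropy M X Z =
     - (\<Sum>(x, z) \<in> (\<lambda>\<omega>. (X \<omega>, Z \<omega>)) ` space M.
          pr M (\<lambda>\<omega>. (X \<omega>, Z \<omega>)) (x, z) *
          log 2 (pr M (\<lambda>\<omega>. (X \<omega>, Z \<omega>)) (x, z) / pr M Z z))"

definition cond_mutual_info ::
  "'a measure \<Rightarrow> ('a \<Rightarrow> 'b) \<Rightarrow> ('a \<Rightarrow> 'c) \<Rightarrow> ('a \<Rightarrow> 'd) \<Rightarrow> real" where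
  "cond_mutual_info M X Y Z =
     (\<Sum>(x, y, z) \<in> (\<lambda>\<omega>. (X \<omega>, Y \<omega>, Z \<omega>)) ` space M.
        pr M (\<lambda>\<omega>. (X \<omega>, Y \<omega>, Z \<omega>)) (x, y, z) *
        log 2 (pr M (\<lambda>\<omega>. (X \<omega>, Y \<omega>, Z \<omega>)) (x, y, z) * pr M Z z /
               (pr M (\<lambda>\<omega>. (X \<omega>, Z \<omega>)) (x, z) * pr M (\<lambda>\<omega>. (Y \<omega>, Z \<omega>)) (y, z))))"

definition cond_mutual_info3 ::
  "'a measure \<Rightarrow> ('a \<Rightarrow> 'b) \<Rightarrow> ('a \<Rightarrow> 'c) \<Rightarrow> ('a \<Rightarrow> 'd) \<Rightarrow> ('a \<Rightarrow> 'e) \<Rightarrow> real" where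
  "cond_mutual_info3 M A B C D =
     cond_mutual_info M A B D - cond_mutual_info M A B (\<lambda>\<omega>. (C \<omega>, D \<omega>))"

definition window :: "(int \<Rightarrow> 'a \<Rightarrow> 'y) \<Rightarrow> int \<Rightarrow> int \<Rightarrow> 'a \<Rightarrow> 'y list" where
  "window Y a b = (\<lambda>\<omega>. map (\<lambda>i. Y i \<omega>) [a..b])"

definition jointly_stationary ::
  "'a measure \<Rightarrow> (int \<Rightarrow> 'a \<Rightarrow> 'y) \<Rightarrow> (int \<Rightarrow> 'a \<Rightarrow> 'r) \<Rightarrow> bool" where
  "jointly_stationary M Y R \<longleftrightarrow>
     distr M (Pi\<^sub>M UNIV (\<lambda>_::int. count_space UNIV)) (\<lambda>\<omega> t. (Y t \<omega>, R t \<omega>)) =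
     distr M (Pi\<^sub>M UNIV (\<lambda>_::int. count_space UNIV)) (\<lambda>\<omega> t. (Y (t + 1) \<omega>, R (t + 1) \<omega>))"

text \<open>Generator condition: for every t, the past ((Y_s)_{s<=t}, (R_s)_{s<t}) is
  conditionally independent of the future ((Y_s)_{s>t}, (R_s)_{s>t}) given the
  (discrete) memory R_t.\<close>
definition generator_condition ::
  "'a measure \<Rightarrow> (int \<Rightarrow> 'a \<Rightarrow> 'y) \<Rightarrow> (int \<Rightarrow> 'a \<Rightarrow> 'r) \<Rightarrow> bool" where
  "generator_condition M Y R \<longleftrightarrow>
     (\<forall>t::int. \<forall>A \<in> sets (Pi\<^sub>M UNIV (\<lambda>_::nat. count_space UNIV)).
        \<forall>B \<in> sets (Pi\<^sub>M UNIV (\<lambda>_::nat. count_space UNIV)). \<forall>r.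
       let past = (\<lambda>\<omega> s::nat. (Y (t - int s) \<omega>, R (t - 1 - int s) \<omega>));
           fut  = (\<lambda>\<omega> s::nat. (Y (t + 1 + int s) \<omega>, R (t + 1 + int s) \<omega>))
       in measure M {\<omega> \<in> space M. past \<omega> \<in> A \<and> fut \<omega> \<in> B \<and> R t \<omega> = r} *
          measure M {\<omega> \<in> space M. R t \<omega> = r} =
          measure M {\<omega> \<in> space M. past \<omega> \<in> A \<and> R t \<omega> = r} *
          measure M {\<omega> \<in> space M. fut \<omega> \<in> B \<and> R t \<omega> = r})"

end

theory Submission
  imports Defs
begin


definition ent :: "'a measure \<Rightarrow> ('a \<Rightarrow> 'b) \<Rightarrow> real" where
  "ent M X = - (\<Sum>x\<in>X ` space M. pr M X x * log 2 (pr M X x))"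

lemma pr_alt: "pr M X x = measure M (X -` {x} \<inter> space M)"
  unfolding pr_def by (rule arg_cong[where f="measure M"]) auto

lemma ent_recode:
  assumes "\<forall>\<omega>\<in>space M. X \<omega> = f (Z \<omega>)" "\<forall>\<omega>\<in>space M. Z \<omega> = g (X \<omega>)"
  shows "ent M X = ent M Z"
proof -
  have im: "X ` space M = f ` Z ` space M" using assms(1) by (auto simp: image_iff)
  have inj: "inj_on f (Z ` space M)"
  proof (rule inj_onI)
    fix a b assume "a \<in> Z ` space M" "b \<in> Z ` space M" "f a = f b"
    then obtain wa wb where "wa \<in> space M" "wb \<in> space M" "a = Z wa" "b = Z wb" "f a = f b" by blast
    then show "a = b" using assms by metis
  qed
  have pr: "pr M X (f z) = pr M Z z" if zin: "z \<in> Z ` space M" for z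
  proof -
    obtain \<omega>0 where w0: "\<omega>0 \<in> space M" "z = Z \<omega>0" using zin by blast
    have "{\<omega> \<in> space M. X \<omega> = f z} = {\<omega> \<in> space M. Z \<omega> = z}"
    proof safe
      fix \<omega> assume om: "\<omega> \<in> space M" "X \<omega> = f z"
      have 1: "Z \<omega> = g (X \<omega>)" using assms(2) om(1) by blast
      have 2: "X \<omega>0 = f (Z \<omega>0)" using assms(1) w0(1) by blast
      have 3: "Z \<omega>0 = g (X \<omega>0)" using assms(2) w0(1) by blast
      have 4: "X \<omega> = X \<omega>0" using om(2) w0(2) 2 by simp
      show "Z \<omega> = z" using 1 3 4 w0(2) by simp
    next
      fix \<omega> assume "\<omega> \<in> space M" "z = Z \<omega>" then show "X \<omega> = f (Z \<omega>)" using assms(1) by blast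
    qed
    then show ?thesis unfolding pr_def by simp
  qed
  show ?thesis unfolding ent_def im
    by (simp add: sum.reindex[OF inj] pr)
qed

context prob_space
begin

lemma marg:
  assumes V: "simple_function M V"
  shows "(\<Sum>v\<in>V ` space M. pr M V v * h (f v)) =
         (\<Sum>w\<in>(\<lambda>\<omega>. f (V \<omega>)) ` space M. pr M (\<lambda>\<omega>. f (V \<omega>)) w * h w)"
proof -
  let ?S = "V ` space M" and ?T = "(\<lambda>\<omega>. f (V \<omega>)) ` space M"
  have fS: "finite ?S" using V by (rule simple_functionD)
  have T: "?T = f ` ?S" by auto
  have fT: "finite ?T" unfolding T using fS by simp
  have pr_sum: "pr M (\<lambda>\<omega>. f (V \<omega>)) w = (\<Sum>v\<in>{v \<in> ?S. f v = w}. pr M V v)" for w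
  proof -
    have "{\<omega> \<in> space M. f (V \<omega>) = w} = (\<Union>v\<in>{v \<in> ?S. f v = w}. V -` {v} \<inter> space M)"
      by auto
    then have "pr M (\<lambda>\<omega>. f (V \<omega>)) w = measure M (\<Union>v\<in>{v \<in> ?S. f v = w}. V -` {v} \<inter> space M)"
      unfolding pr_def by simp
    also have "\<dots> = (\<Sum>v\<in>{v \<in> ?S. f v = w}. measure M (V -` {v} \<inter> space M))"
      by (rule measure_finite_Union) (use fS V in \<open>auto simp: disjoint_family_on_def simple_functionD\<close>)
    finally show ?thesis by (simp add: pr_alt)
  qed
  have "(\<Sum>v\<in>?S. pr M V v * h (f v)) = (\<Sum>w\<in>?T. \<Sum>v\<in>{v \<in> ?S. f v = w}. pr M V v * h (f v))"
    by (rule sum.group[symmetric]) (use fS fT in auto)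
  also have "\<dots> = (\<Sum>w\<in>?T. \<Sum>v\<in>{v \<in> ?S. f v = w}. pr M V v * h w)"
    by (intro sum.cong) auto
  also have "\<dots> = (\<Sum>w\<in>?T. pr M (\<lambda>\<omega>. f (V \<omega>)) w * h w)"
    by (simp add: pr_sum sum_distrib_right)
  finally show ?thesis .
qed

lemma pr_nonneg: "0 \<le> pr M X x" unfolding pr_def by simp

lemma pr_mono_pair:
  assumes "{\<omega> \<in> space M. Z \<omega> = z} \<in> sets M"
  shows "pr M (\<lambda>\<omega>. (X \<omega>, Z \<omega>)) (x, z) \<le> pr M Z z"
  unfolding pr_def by (rule finite_measure_mono) (use assms in auto)


lemma pr_le_fun:
  assumes W: "\<forall>\<omega>\<in>space M. W \<omega> = f (V \<omega>)" "simple_function M W" and v: "v \<in> V ` space M"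
  shows "pr M V v \<le> pr M W (f v)"
proof -
  have "f v \<in> W ` space M" using v W(1) by force
  have "W -` {f v} \<inter> space M \<in> sets M" by (rule simple_functionD(2)[OF W(2)])
  then show ?thesis unfolding pr_alt
    by (intro finite_measure_mono) (use W(1) in auto)
qed

lemma ce_ent:
  assumes X: "simple_function M X" and Z: "simple_function M Z"
  shows "cond_entropy M X Z = ent M (\<lambda>\<omega>. (X \<omega>, Z \<omega>)) - ent M Z"
proof -
  let ?V = "\<lambda>\<omega>. (X \<omega>, Z \<omega>)"
  have V: "simple_function M ?V" using X Z by simp
  have t: "pr M ?V v * log 2 (pr M ?V v / pr M Z (snd v)) =
     pr M ?V v * log 2 (pr M ?V v) - pr M ?V v * log 2 (pr M Z (snd v))" if vin: "v \<in> ?V ` space M" for v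
  proof (cases "pr M ?V v = 0")
    case True then show ?thesis by simp
  next
    case False
    then have p: "0 < pr M ?V v" using pr_nonneg[of ?V v] by linarith
    have "pr M ?V v \<le> pr M Z (snd v)"
      by (rule pr_le_fun[OF _ Z vin]) simp
    with p show ?thesis by (simp add: log_divide right_diff_distrib)
  qed
  have "cond_entropy M X Z = -(\<Sum>v\<in>?V ` space M. pr M ?V v * log 2 (pr M ?V v / pr M Z (snd v)))"
    unfolding cond_entropy_def by (simp add: case_prod_beta)
  also have "\<dots> = -((\<Sum>v\<in>?V ` space M. pr M ?V v * log 2 (pr M ?V v)) - (\<Sum>v\<in>?V ` space M. pr M ?V v * log 2 (pr M Z (snd v))))"
    by (simp add: sum_subtractf[symmetric] t cong: sum.cong)
  also have "(\<Sum>v\<in>?V ` space M. pr M ?V v * log 2 (pr M Z (snd v))) = (\<Sum>z\<in>Z ` space M. pr M Z z * log 2 (pr M Z z))"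
    using marg[OF V, of "\<lambda>z. log 2 (pr M Z z)" snd] by simp
  finally show ?thesis unfolding ent_def by simp
qed

lemma cmi_ent:
  assumes X: "simple_function M X" and Y: "simple_function M Y" and Z: "simple_function M Z"
  shows "cond_mutual_info M X Y Z = ent M (\<lambda>\<omega>. (X \<omega>, Z \<omega>)) + ent M (\<lambda>\<omega>. (Y \<omega>, Z \<omega>))
     - ent M (\<lambda>\<omega>. (X \<omega>, Y \<omega>, Z \<omega>)) - ent M Z"
proof -
  let ?V = "\<lambda>\<omega>. (X \<omega>, Y \<omega>, Z \<omega>)"
  let ?XZ = "\<lambda>\<omega>. (X \<omega>, Z \<omega>)" and ?YZ = "\<lambda>\<omega>. (Y \<omega>, Z \<omega>)"
  let ?fxz = "\<lambda>v. (fst v, snd (snd v))" and ?fyz = "\<lambda>v. (fst (snd v), snd (snd v))"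
  have V: "simple_function M ?V" using X Y Z by simp
  have t: "pr M ?V v * log 2 (pr M ?V v * pr M Z (snd (snd v)) / (pr M ?XZ (?fxz v) * pr M ?YZ (?fyz v))) =
     pr M ?V v * log 2 (pr M ?V v) + pr M ?V v * log 2 (pr M Z (snd (snd v)))
     - pr M ?V v * log 2 (pr M ?XZ (?fxz v)) - pr M ?V v * log 2 (pr M ?YZ (?fyz v))"
    if vin: "v \<in> ?V ` space M" for v
  proof (cases "pr M ?V v = 0")
    case True then show ?thesis by simp
  next
    case False
    then have p: "0 < pr M ?V v" using pr_nonneg[of ?V v] by linarith
    have "pr M ?V v \<le> pr M Z (snd (snd v))"
      by (rule pr_le_fun[OF _ Z vin]) simp
    moreover have "pr M ?V v \<le> pr M ?XZ (?fxz v)"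
      by (rule pr_le_fun[OF _ _ vin]) (use X Z in simp_all)
    moreover have "pr M ?V v \<le> pr M ?YZ (?fyz v)"
      by (rule pr_le_fun[OF _ _ vin]) (use Y Z in simp_all)
    ultimately show ?thesis using p
      by (simp add: log_divide log_mult algebra_simps)
  qed
  have "cond_mutual_info M X Y Z = (\<Sum>v\<in>?V ` space M. pr M ?V v * log 2 (pr M ?V v * pr M Z (snd (snd v)) / (pr M ?XZ (?fxz v) * pr M ?YZ (?fyz v))))"
    unfolding cond_mutual_info_def by (simp add: case_prod_beta)
  also have "\<dots> = (\<Sum>v\<in>?V ` space M. pr M ?V v * log 2 (pr M ?V v) + pr M ?V v * log 2 (pr M Z (snd (snd v)))
     - pr M ?V v * log 2 (pr M ?XZ (?fxz v)) - pr M ?V v * log 2 (pr M ?YZ (?fyz v)))"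
    by (rule sum.cong[OF refl t])
  also have "\<dots> = (\<Sum>v\<in>?V ` space M. pr M ?V v * log 2 (pr M ?V v)) + (\<Sum>v\<in>?V ` space M. pr M ?V v * log 2 (pr M Z (snd (snd v))))
     - (\<Sum>v\<in>?V ` space M. pr M ?V v * log 2 (pr M ?XZ (?fxz v))) - (\<Sum>v\<in>?V ` space M. pr M ?V v * log 2 (pr M ?YZ (?fyz v)))"
    by (simp only: sum_subtractf sum.distrib)
  also have "(\<Sum>v\<in>?V ` space M. pr M ?V v * log 2 (pr M Z (snd (snd v)))) = (\<Sum>z\<in>Z ` space M. pr M Z z * log 2 (pr M Z z))"
    using marg[OF V, of "\<lambda>z. log 2 (pr M Z z)" "\<lambda>v. snd (snd v)"] by simp
  also have "(\<Sum>v\<in>?V ` space M. pr M ?V v * log 2 (pr M ?XZ (?fxz v))) = (\<Sum>z\<in>?XZ ` space M. pr M ?XZ z * log 2 (pr M ?XZ z))"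
    using marg[OF V, of "\<lambda>z. log 2 (pr M ?XZ z)" ?fxz] by simp
  also have "(\<Sum>v\<in>?V ` space M. pr M ?V v * log 2 (pr M ?YZ (?fyz v))) = (\<Sum>z\<in>?YZ ` space M. pr M ?YZ z * log 2 (pr M ?YZ z))"
    using marg[OF V, of "\<lambda>z. log 2 (pr M ?YZ z)" ?fyz] by simp
  finally show ?thesis unfolding ent_def by simp
qed

lemma cmi_nonneg:
  assumes X: "simple_function M X" and Y: "simple_function M Y" and Z: "simple_function M Z"
  shows "0 \<le> cond_mutual_info M X Y Z"
proof -
  interpret information_space M 2 by standard simp
  have sd: "simple_distributed M V (pr M V)" if "simple_function M V" for V
    by (rule simple_distributedI[OF that]) (auto simp: pr_alt)
  have "conditional_mutual_information 2 (count_space (X ` space M)) (count_space (Y ` space M)) (count_space (Z ` space M)) X Y Z = cond_mutual_info M X Y Z"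
    unfolding cond_mutual_info_def
    apply (subst conditional_mutual_information_eq[OF sd sd sd sd])
    using X Y Z by simp_all
  then show ?thesis using conditional_mutual_information_nonneg[OF X Y Z] by simp
qed

end



locale gen_setting = prob_space M for M :: "'a measure" +
  fixes Y :: "int \<Rightarrow> 'a \<Rightarrow> 'y::finite" and R :: "int \<Rightarrow> 'a \<Rightarrow> 'r::finite"
  assumes mY: "\<And>t. Y t \<in> measurable M (count_space UNIV)"
      and mR: "\<And>t. R t \<in> measurable M (count_space UNIV)"
begin

definition obs :: "'a \<Rightarrow> int + int \<Rightarrow> 'y + 'r" where
  "obs \<omega> c = (case c of Inl i \<Rightarrow> Inl (Y i \<omega>) | Inr i \<Rightarrow> Inr (R i \<omega>))"

definition EE :: "(int + int) set \<Rightarrow> real" where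
  "EE A = ent M (\<lambda>\<omega>. restrict (obs \<omega>) A)"

definition rep :: "('a \<Rightarrow> 'b) \<Rightarrow> (int + int) set \<Rightarrow> bool" where
  "rep X A \<longleftrightarrow> finite A \<and> (\<exists>f g. (\<forall>\<omega>\<in>space M. X \<omega> = f (restrict (obs \<omega>) A)) \<and>
      (\<forall>\<omega>\<in>space M. restrict (obs \<omega>) A = g (X \<omega>)))"

lemma obs_meas: "(\<lambda>\<omega>. obs \<omega> c) \<in> measurable M (count_space UNIV)"
proof (cases c)
  case (Inl i)
  have "(\<lambda>\<omega>. Inl (Y i \<omega>) :: 'y + 'r) \<in> measurable M (count_space UNIV)"
    by (rule measurable_compose[OF mY]) (simp add: measurable_count_space_eq1)
  then show ?thesis by (simp add: obs_def Inl)
next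
  case (Inr i)
  have "(\<lambda>\<omega>. Inr (R i \<omega>) :: 'y + 'r) \<in> measurable M (count_space UNIV)"
    by (rule measurable_compose[OF mR]) (simp add: measurable_count_space_eq1)
  then show ?thesis by (simp add: obs_def Inr)
qed

lemma obs_sets: "{\<omega> \<in> space M. obs \<omega> c = v} \<in> sets M"
proof -
  have "(\<lambda>\<omega>. obs \<omega> c) -` {v} \<inter> space M \<in> sets M"
    by (rule measurable_sets[OF obs_meas]) simp
  moreover have "(\<lambda>\<omega>. obs \<omega> c) -` {v} \<inter> space M = {\<omega> \<in> space M. obs \<omega> c = v}" by auto
  ultimately show ?thesis by simp
qed

lemma sf_restr: assumes "finite A" shows "simple_function M (\<lambda>\<omega>. restrict (obs \<omega>) A)"
  unfolding simple_function_def
proof safe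
  have "(\<lambda>\<omega>. restrict (obs \<omega>) A) ` space M \<subseteq> PiE A (\<lambda>_. UNIV)" by auto
  moreover have "finite (PiE A (\<lambda>_. UNIV :: ('y + 'r) set))" using assms by (intro finite_PiE) auto
  ultimately show "finite ((\<lambda>\<omega>. restrict (obs \<omega>) A) ` space M)" by (rule finite_subset)
next
  fix \<omega> assume "\<omega> \<in> space M"
  let ?v = "restrict (obs \<omega>) A"
  have "(\<lambda>\<omega>. restrict (obs \<omega>) A) -` {?v} \<inter> space M = {\<omega>' \<in> space M. \<forall>c\<in>A. obs \<omega>' c = ?v c}"
    apply (auto simp: fun_eq_iff restrict_def) by metis
  also have "\<dots> \<in> sets M"
    by (rule sets.sets_Collect_finite_All) (use assms obs_sets in auto)
  finally show "(\<lambda>\<omega>. restrict (obs \<omega>) A) -` {?v} \<inter> space M \<in> sets M" .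
qed

lemma rep_finite: "rep X A \<Longrightarrow> finite A" unfolding rep_def by simp

lemma ent_rep: assumes "rep X A" shows "ent M X = EE A"
proof -
  from assms obtain f g where "\<forall>\<omega>\<in>space M. X \<omega> = f (restrict (obs \<omega>) A)"
      "\<forall>\<omega>\<in>space M. restrict (obs \<omega>) A = g (X \<omega>)" unfolding rep_def by blast
  then show ?thesis unfolding EE_def by (rule ent_recode)
qed

lemma rep_sf: assumes "rep X A" shows "simple_function M X"
proof -
  from assms obtain f g where fg: "\<forall>\<omega>\<in>space M. X \<omega> = f (restrict (obs \<omega>) A)" and fA: "finite A"
    unfolding rep_def by blast
  have "simple_function M (f \<circ> (\<lambda>\<omega>. restrict (obs \<omega>) A))" using sf_restr[OF fA] by simp
  then show ?thesis by (subst simple_function_cong[where g="f \<circ> (\<lambda>\<omega>. restrict (obs \<omega>) A)"]) (use fg in auto)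
qed

lemma rep_restr: "finite A \<Longrightarrow> rep (\<lambda>\<omega>. restrict (obs \<omega>) A) A"
  unfolding rep_def by (intro conjI exI[of _ id]) auto

lemma rep_pair: assumes "rep X A" "rep Z B" shows "rep (\<lambda>\<omega>. (X \<omega>, Z \<omega>)) (A \<union> B)"
proof -
  from assms(1) obtain f g where f: "\<forall>\<omega>\<in>space M. X \<omega> = f (restrict (obs \<omega>) A)" and
     g: "\<forall>\<omega>\<in>space M. restrict (obs \<omega>) A = g (X \<omega>)" and fA: "finite A" unfolding rep_def by blast
  from assms(2) obtain f' g' where f': "\<forall>\<omega>\<in>space M. Z \<omega> = f' (restrict (obs \<omega>) B)" and
     g': "\<forall>\<omega>\<in>space M. restrict (obs \<omega>) B = g' (Z \<omega>)" and fB: "finite B" unfolding rep_def by blast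
  let ?F = "\<lambda>u. (f (restrict u A), f' (restrict u B))"
  let ?G = "\<lambda>(x, z). restrict (\<lambda>c. if c \<in> A then g x c else g' z c) (A \<union> B)"
  show ?thesis unfolding rep_def
  proof (intro conjI exI[of _ ?F] exI[of _ ?G] ballI)
    show "finite (A \<union> B)" using fA fB by simp
  next
    fix \<omega> assume w: "\<omega> \<in> space M"
    have "restrict (restrict (obs \<omega>) (A \<union> B)) A = restrict (obs \<omega>) A"
         "restrict (restrict (obs \<omega>) (A \<union> B)) B = restrict (obs \<omega>) B"
      by (auto simp: restrict_def fun_eq_iff)
    then show "(X \<omega>, Z \<omega>) = ?F (restrict (obs \<omega>) (A \<union> B))" using f f' w by simp
  next
    fix \<omega> assume w: "\<omega> \<in> space M"
    have 1: "g (X \<omega>) c = obs \<omega> c" if "c \<in> A" for c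
      using g w that by (metis restrict_apply')
    have 2: "g' (Z \<omega>) c = obs \<omega> c" if "c \<in> B" for c
      using g' w that by (metis restrict_apply')
    show "restrict (obs \<omega>) (A \<union> B) = ?G (X \<omega>, Z \<omega>)"
      using 1 2 by (auto simp: restrict_def fun_eq_iff)
  qed
qed

lemma rep_R: "rep (R i) {Inr i}"
  unfolding rep_def
proof (intro conjI exI[of _ "\<lambda>u. projr (u (Inr i))"] exI[of _ "\<lambda>r. restrict (\<lambda>c. Inr r) {Inr i}"] ballI)
  fix \<omega> show "R i \<omega> = projr (restrict (obs \<omega>) {Inr i} (Inr i))" by (simp add: obs_def)
  show "restrict (obs \<omega>) {Inr i} = restrict (\<lambda>c. Inr (R i \<omega>)) {Inr i}"
    by (auto simp: restrict_def fun_eq_iff obs_def)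
qed simp

lemma rep_window: "rep (window Y a b) (Inl ` {a..b})"
  unfolding rep_def
proof (intro conjI exI[of _ "\<lambda>u. map (\<lambda>i. projl (u (Inl i))) [a..b]"]
    exI[of _ "\<lambda>l. restrict (\<lambda>c. case c of Inl i \<Rightarrow> Inl (l ! nat (i - a)) | Inr _ \<Rightarrow> undefined) (Inl ` {a..b})"] ballI)
  fix \<omega>
  show "window Y a b \<omega> = map (\<lambda>i. projl (restrict (obs \<omega>) (Inl ` {a..b}) (Inl i))) [a..b]"
    by (auto simp: window_def obs_def)
  have "map (\<lambda>i. Y i \<omega>) [a..b] ! nat (i - a) = Y i \<omega>" if "a \<le> i" "i \<le> b" for i
    using that by simp
  then show "restrict (obs \<omega>) (Inl ` {a..b}) =
     restrict (\<lambda>c. case c of Inl i \<Rightarrow> Inl (window Y a b \<omega> ! nat (i - a)) | Inr _ \<Rightarrow> undefined) (Inl ` {a..b})"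
    by (auto simp: restrict_def fun_eq_iff obs_def window_def)
qed simp

lemma ce_E: assumes "rep X A" "rep Z C" shows "cond_entropy M X Z = EE (A \<union> C) - EE C"
  using ce_ent[OF rep_sf[OF assms(1)] rep_sf[OF assms(2)]] ent_rep[OF rep_pair[OF assms]] ent_rep[OF assms(2)]
  by simp

lemma cmi_E: assumes "rep X A" "rep V B" "rep Z C"
  shows "cond_mutual_info M X V Z = EE (A \<union> C) + EE (B \<union> C) - EE (A \<union> (B \<union> C)) - EE C"
  using cmi_ent[OF rep_sf[OF assms(1)] rep_sf[OF assms(2)] rep_sf[OF assms(3)]]
    ent_rep[OF rep_pair[OF assms(1,3)]] ent_rep[OF rep_pair[OF assms(2,3)]]
    ent_rep[OF rep_pair[OF assms(1) rep_pair[OF assms(2,3)]]] ent_rep[OF assms(3)]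
  by simp

lemma EE_submod: assumes "finite A" "finite B" "finite C"
  shows "EE (A \<union> (B \<union> C)) + EE C \<le> EE (A \<union> C) + EE (B \<union> C)"
  using cmi_nonneg[OF rep_sf[OF rep_restr[OF assms(1)]] rep_sf[OF rep_restr[OF assms(2)]] rep_sf[OF rep_restr[OF assms(3)]]]
    cmi_E[OF rep_restr[OF assms(1)] rep_restr[OF assms(2)] rep_restr[OF assms(3)]]
  by simp

lemma EE_mono: assumes "finite B" "A \<subseteq> B" shows "EE A \<le> EE B"
proof -
  have fA: "finite A" using assms finite_subset by blast
  have "B \<union> A = B" using assms by blast
  then show ?thesis using EE_submod[OF assms(1) assms(1) fA] by simp
qed

lemma CE_anti: assumes "finite A" "finite D" "C \<subseteq> D"
  shows "EE (A \<union> D) - EE D \<le> EE (A \<union> C) - EE C"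
proof -
  have fC: "finite C" using assms finite_subset by blast
  have "D \<union> C = D" using assms by blast
  then show ?thesis using EE_submod[OF assms(1) assms(2) fC] by simp
qed

lemma CE_nonneg: assumes "finite A" "finite C" shows "0 \<le> EE (A \<union> C) - EE C"
  using EE_mono[of "A \<union> C" C] assms by auto

end



lemma cyl_sets:
  assumes "finite A" "\<And>c. c \<in> A \<Longrightarrow> (\<lambda>p. h c p) \<in> measurable N (count_space UNIV)"
  shows "{p \<in> space N. restrict (\<lambda>c. h c p) A = x} \<in> sets N"
proof (cases "x \<in> extensional A")
  case True
  have "{p \<in> space N. restrict (\<lambda>c. h c p) A = x} = {p \<in> space N. \<forall>c\<in>A. h c p = x c}"
    using True by (auto simp: fun_eq_iff restrict_def extensional_def)
  also have "\<dots> \<in> sets N"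
  proof (rule sets.sets_Collect_finite_All[OF _ assms(1)])
    fix c assume "c \<in> A"
    have "(\<lambda>p. h c p) -` {x c} \<inter> space N \<in> sets N"
      by (rule measurable_sets[OF assms(2)[OF \<open>c \<in> A\<close>]]) simp
    moreover have "(\<lambda>p. h c p) -` {x c} \<inter> space N = {p \<in> space N. h c p = x c}" by auto
    ultimately show "{p \<in> space N. h c p = x c} \<in> sets N" by simp
  qed
  finally show ?thesis .
next
  case False
  have "\<forall>p. restrict (\<lambda>c. h c p) A \<noteq> x" using False restrict_extensional by metis
  then have e: "{p \<in> space N. restrict (\<lambda>c. h c p) A = x} = {}" by auto
  show ?thesis by (simp only: e sets.empty_sets)
qed

lemma ent_superset:
  assumes "finite S" "X ` space M \<subseteq> S"
  shows "ent M X = - (\<Sum>x\<in>S. pr M X x * log 2 (pr M X x))"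
proof -
  have "(\<Sum>x\<in>X ` space M. pr M X x * log 2 (pr M X x)) = (\<Sum>x\<in>S. pr M X x * log 2 (pr M X x))"
  proof (rule sum.mono_neutral_left[OF assms(1) assms(2)], safe)
    fix x assume "x \<in> S" "x \<notin> X ` space M"
    then have e: "{\<omega> \<in> space M. X \<omega> = x} = {}" by auto
    have "pr M X x = 0" unfolding pr_def by (subst e) simp
    then show "pr M X x * log 2 (pr M X x) = 0" by simp
  qed
  then show ?thesis unfolding ent_def by simp
qed

lemma ent_distr:
  assumes U: "U \<in> measurable M N" and V: "V \<in> measurable M N" and eq: "distr M N U = distr M N V"
    and G: "\<And>x. {p \<in> space N. G p = x} \<in> sets N" and fin: "finite (G ` space N)"
  shows "ent M (\<lambda>\<omega>. G (U \<omega>)) = ent M (\<lambda>\<omega>. G (V \<omega>))"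
proof -
  have pr: "pr M (\<lambda>\<omega>. G (W \<omega>)) x = measure (distr M N W) {p \<in> space N. G p = x}"
    if W: "W \<in> measurable M N" for W x
  proof -
    have "measure (distr M N W) {p \<in> space N. G p = x} = measure M (W -` {p \<in> space N. G p = x} \<inter> space M)"
      by (rule measure_distr[OF W G])
    also have "W -` {p \<in> space N. G p = x} \<inter> space M = {\<omega> \<in> space M. G (W \<omega>) = x}"
      using measurable_space[OF W] by auto
    finally show ?thesis unfolding pr_def by simp
  qed
  have sU: "(\<lambda>\<omega>. G (U \<omega>)) ` space M \<subseteq> G ` space N" using measurable_space[OF U] by auto
  have sV: "(\<lambda>\<omega>. G (V \<omega>)) ` space M \<subseteq> G ` space N" using measurable_space[OF V] by auto
  show ?thesis
    unfolding ent_superset[OF fin sU] ent_superset[OF fin sV] pr[OF U] pr[OF V] eq ..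
qed

context gen_setting
begin

definition procj :: "nat \<Rightarrow> 'a \<Rightarrow> int \<Rightarrow> 'y \<times> 'r" where
  "procj j \<omega> = (\<lambda>t. (Y (t + int j) \<omega>, R (t + int j) \<omega>))"

abbreviation "PI \<equiv> Pi\<^sub>M (UNIV :: int set) (\<lambda>_. count_space (UNIV :: ('y \<times> 'r) set))"

lemma pair_meas: "(\<lambda>\<omega>. (Y t \<omega>, R t \<omega>)) \<in> measurable M (count_space UNIV)"
proof (subst measurable_count_space_eq2_countable, safe)
  fix y r
  have "(\<lambda>\<omega>. (Y t \<omega>, R t \<omega>)) -` {(y, r)} \<inter> space M = (Y t -` {y} \<inter> space M) \<inter> (R t -` {r} \<inter> space M)"
    by auto
  also have "\<dots> \<in> sets M"
    using measurable_sets[OF mY, of "{y}" t] measurable_sets[OF mR, of "{r}" t] by auto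
  finally show "(\<lambda>\<omega>. (Y t \<omega>, R t \<omega>)) -` {(y, r)} \<inter> space M \<in> sets M" .
qed auto

lemma procj_meas: "procj j \<in> measurable M PI"
proof -
  have "(\<lambda>\<omega>. \<lambda>t\<in>UNIV. (Y (t + int j) \<omega>, R (t + int j) \<omega>)) \<in> measurable M PI"
    by (rule measurable_restrict) (rule pair_meas)
  then show ?thesis unfolding procj_def by (simp add: restrict_UNIV)
qed

lemma shift_meas: "(\<lambda>f. \<lambda>t. f (t + 1)) \<in> measurable PI PI"
proof -
  have "(\<lambda>f. \<lambda>t\<in>UNIV. f (t + 1)) \<in> measurable PI PI"
    by (rule measurable_restrict) (rule measurable_component_singleton, simp)
  then show ?thesis by (simp add: restrict_UNIV)
qed

lemma procj_stat:
  assumes st: "jointly_stationary M Y R"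
  shows "distr M PI (procj j) = distr M PI (procj 0)"
proof (induction j)
  case 0 then show ?case by simp
next
  case (Suc j)
  let ?S = "\<lambda>f. \<lambda>t. f (t + 1)"
  have e1: "procj (Suc j) = ?S \<circ> procj j"
    by (auto simp: procj_def fun_eq_iff algebra_simps)
  have e2: "procj 1 = ?S \<circ> procj 0" by (auto simp: procj_def fun_eq_iff)
  have "distr M PI (procj (Suc j)) = distr (distr M PI (procj j)) PI ?S"
    unfolding e1 by (rule distr_distr[OF shift_meas procj_meas, symmetric])
  also have "\<dots> = distr (distr M PI (procj 0)) PI ?S" using Suc by simp
  also have "\<dots> = distr M PI (procj 1)"
    unfolding e2 by (rule distr_distr[OF shift_meas procj_meas])
  also have "\<dots> = distr M PI (procj 0)"
    using st unfolding jointly_stationary_def procj_def by simp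
  finally show ?case .
qed

definition shift :: "nat \<Rightarrow> int + int \<Rightarrow> int + int" where
  "shift j = map_sum (\<lambda>i. i + int j) (\<lambda>i. i + int j)"

definition Gf :: "(int + int) set \<Rightarrow> (int \<Rightarrow> 'y \<times> 'r) \<Rightarrow> (int + int \<Rightarrow> 'y + 'r)" where
  "Gf A p = restrict (\<lambda>c. case c of Inl i \<Rightarrow> Inl (fst (p i)) | Inr i \<Rightarrow> Inr (snd (p i))) A"

lemma EE_shift:
  assumes st: "jointly_stationary M Y R" and fA: "finite A"
  shows "EE (shift j ` A) = EE A"
proof -
  have inj: "inj (shift j)" unfolding shift_def inj_def
  proof (intro allI impI)
    fix x y :: "int + int"
    assume "map_sum (\<lambda>i. i + int j) (\<lambda>i. i + int j) x = map_sum (\<lambda>i. i + int j) (\<lambda>i. i + int j) y"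
    then show "x = y" by (cases x; cases y) auto
  qed
  have "EE (shift j ` A) = ent M (\<lambda>\<omega>. Gf A (procj j \<omega>))"
    unfolding EE_def
  proof (rule ent_recode[where f="\<lambda>v. restrict (\<lambda>c'. v (inv (shift j) c')) (shift j ` A)"
        and g="\<lambda>u. restrict (\<lambda>c. u (shift j c)) A"])
    show "\<forall>\<omega>\<in>space M. restrict (obs \<omega>) (shift j ` A) =
       restrict (\<lambda>c'. Gf A (procj j \<omega>) (inv (shift j) c')) (shift j ` A)"
      using inj by (auto simp: fun_eq_iff restrict_def Gf_def procj_def obs_def shift_def split: sum.splits)
    show "\<forall>\<omega>\<in>space M. Gf A (procj j \<omega>) = restrict (\<lambda>c. restrict (obs \<omega>) (shift j ` A) (shift j c)) A"
      by (auto simp: fun_eq_iff restrict_def Gf_def procj_def obs_def shift_def split: sum.splits)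
  qed
  also have "\<dots> = ent M (\<lambda>\<omega>. Gf A (procj 0 \<omega>))"
  proof (rule ent_distr[OF procj_meas procj_meas procj_stat[OF st]])
    fix x show "{p \<in> space PI. Gf A p = x} \<in> sets PI"
      unfolding Gf_def
    proof (rule cyl_sets[OF fA])
      fix c assume "c \<in> A"
      show "(\<lambda>p. case c of Inl i \<Rightarrow> Inl (fst (p i)) | Inr i \<Rightarrow> Inr (snd (p i))) \<in> measurable PI (count_space UNIV)"
      proof (cases c)
        case (Inl i)
        have "(\<lambda>p. Inl (fst (p i)) :: 'y + 'r) \<in> measurable PI (count_space UNIV)"
          by (rule measurable_compose[OF measurable_component_singleton[of i UNIV]]) (auto simp: measurable_count_space_eq1)
        then show ?thesis using Inl by simp
      next
        case (Inr i)
        have "(\<lambda>p. Inr (snd (p i)) :: 'y + 'r) \<in> measurable PI (count_space UNIV)"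
          by (rule measurable_compose[OF measurable_component_singleton[of i UNIV]]) (auto simp: measurable_count_space_eq1)
        then show ?thesis using Inr by simp
      qed
    qed
    have "Gf A ` space PI \<subseteq> PiE A (\<lambda>_. UNIV)" unfolding Gf_def by auto
    moreover have "finite (PiE A (\<lambda>_. UNIV :: ('y + 'r) set))" using fA by (intro finite_PiE) auto
    ultimately show "finite (Gf A ` space PI)" by (rule finite_subset)
  qed
  also have "\<dots> = EE A"
    unfolding EE_def
    by (rule arg_cong[where f="ent M"]) (auto simp: fun_eq_iff restrict_def Gf_def procj_def obs_def split: sum.splits)
  finally show ?thesis .
qed

end



context gen_setting
begin

lemma cmi_zero:
  assumes Z: "simple_function M Z"
    and ci: "\<And>x y z. pr M (\<lambda>\<omega>. (X \<omega>, V \<omega>, Z \<omega>)) (x, y, z) * pr M Z z =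
        pr M (\<lambda>\<omega>. (X \<omega>, Z \<omega>)) (x, z) * pr M (\<lambda>\<omega>. (V \<omega>, Z \<omega>)) (y, z)"
  shows "cond_mutual_info M X V Z = 0"
  unfolding cond_mutual_info_def
proof (rule sum.neutral, safe)
  fix \<omega> assume w: "\<omega> \<in> space M"
  let ?x = "X \<omega>" and ?y = "V \<omega>" and ?z = "Z \<omega>"
  let ?p = "pr M (\<lambda>\<omega>. (X \<omega>, V \<omega>, Z \<omega>)) (?x, ?y, ?z)"
  show "?p * log 2 (?p * pr M Z ?z / (pr M (\<lambda>\<omega>. (X \<omega>, Z \<omega>)) (?x, ?z) * pr M (\<lambda>\<omega>. (V \<omega>, Z \<omega>)) (?y, ?z))) = 0"
  proof (cases "?p = 0")
    case False
    then have p: "0 < ?p" using pr_nonneg[of "\<lambda>\<omega>. (X \<omega>, V \<omega>, Z \<omega>)"] by (metis less_eq_real_def)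
    have "?p \<le> pr M Z (snd (snd (?x, ?y, ?z)))"
      by (rule pr_le_fun[OF _ Z]) (use w in auto)
    then have "?p \<le> pr M Z ?z" by simp
    with p have "0 < ?p * pr M Z ?z" by simp
    then have "0 < pr M (\<lambda>\<omega>. (X \<omega>, Z \<omega>)) (?x, ?z) * pr M (\<lambda>\<omega>. (V \<omega>, Z \<omega>)) (?y, ?z)"
      unfolding ci .
    then have ne: "pr M (\<lambda>\<omega>. (X \<omega>, Z \<omega>)) (?x, ?z) * pr M (\<lambda>\<omega>. (V \<omega>, Z \<omega>)) (?y, ?z) \<noteq> 0"
      by linarith
    have q: "pr M (\<lambda>\<omega>. (X \<omega>, Z \<omega>)) (?x, ?z) * pr M (\<lambda>\<omega>. (V \<omega>, Z \<omega>)) (?y, ?z) /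
       (pr M (\<lambda>\<omega>. (X \<omega>, Z \<omega>)) (?x, ?z) * pr M (\<lambda>\<omega>. (V \<omega>, Z \<omega>)) (?y, ?z)) = 1"
      using ne by (rule divide_self)
    show ?thesis unfolding ci q by simp
  qed simp
qed

abbreviation "NP \<equiv> Pi\<^sub>M (UNIV :: nat set) (\<lambda>_. count_space (UNIV :: ('y \<times> 'r) set))"

lemma NP_space: "space NP = UNIV" by (simp add: space_PiM)

lemma NP_coord_meas:
  "(\<lambda>p. (case c of Inl i \<Rightarrow> Inl (fst (p (a i))) | Inr i \<Rightarrow> Inr (snd (p (b i)))) :: 'y + 'r) \<in> measurable NP (count_space UNIV)"
proof (cases c)
  case (Inl i)
  have "(\<lambda>p. Inl (fst (p (a i))) :: 'y + 'r) \<in> measurable NP (count_space UNIV)"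
    by (rule measurable_compose[OF measurable_component_singleton[of "a i" UNIV]]) (auto simp: measurable_count_space_eq1)
  then show ?thesis using Inl by simp
next
  case (Inr i)
  have "(\<lambda>p. Inr (snd (p (b i))) :: 'y + 'r) \<in> measurable NP (count_space UNIV)"
    by (rule measurable_compose[OF measurable_component_singleton[of "b i" UNIV]]) (auto simp: measurable_count_space_eq1)
  then show ?thesis using Inr by simp
qed

lemma gen_CI:
  assumes gen: "generator_condition M Y R" and fA: "finite A" and fB: "finite B"
    and pA: "\<And>c. c \<in> A \<Longrightarrow> (case c of Inl i \<Rightarrow> i \<le> t | Inr i \<Rightarrow> i < t)"
    and pB: "\<And>c. c \<in> B \<Longrightarrow> (case c of Inl i \<Rightarrow> t < i | Inr i \<Rightarrow> t < i)"
  shows "EE (A \<union> {Inr t}) + EE (B \<union> {Inr t}) = EE (A \<union> (B \<union> {Inr t})) + EE {Inr t}"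
proof -
  let ?XA = "\<lambda>\<omega>. restrict (obs \<omega>) A" and ?XB = "\<lambda>\<omega>. restrict (obs \<omega>) B"
  define past where "past = (\<lambda>\<omega> s::nat. (Y (t - int s) \<omega>, R (t - 1 - int s) \<omega>))"
  define fut where "fut = (\<lambda>\<omega> s::nat. (Y (t + 1 + int s) \<omega>, R (t + 1 + int s) \<omega>))"
  define pv where "pv = (\<lambda>p c. (case c of Inl i \<Rightarrow> Inl (fst (p (nat (t - i)))) | Inr i \<Rightarrow> Inr (snd (p (nat (t - 1 - i))))) :: 'y + 'r)"
  define fv where "fv = (\<lambda>p c. (case c of Inl i \<Rightarrow> Inl (fst (p (nat (i - t - 1)))) | Inr i \<Rightarrow> Inr (snd (p (nat (i - t - 1))))) :: 'y + 'r)"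
  have hA: "?XA \<omega> = restrict (pv (past \<omega>)) A" for \<omega>
  proof -
    have "obs \<omega> c = pv (past \<omega>) c" if "c \<in> A" for c
      using pA[OF that] by (cases c) (auto simp: obs_def pv_def past_def)
    then show ?thesis by (auto simp: restrict_def fun_eq_iff)
  qed
  have hB: "?XB \<omega> = restrict (fv (fut \<omega>)) B" for \<omega>
  proof -
    have "obs \<omega> c = fv (fut \<omega>) c" if "c \<in> B" for c
      using pB[OF that] by (cases c) (auto simp: obs_def fv_def fut_def)
    then show ?thesis by (auto simp: restrict_def fun_eq_iff)
  qed
  have SA: "{p \<in> space NP. restrict (\<lambda>c. pv p c) A = x} \<in> sets NP" for x
    unfolding pv_def by (rule cyl_sets[OF fA NP_coord_meas])
  have SB: "{p \<in> space NP. restrict (\<lambda>c. fv p c) B = x} \<in> sets NP" for x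
    unfolding fv_def by (rule cyl_sets[OF fB NP_coord_meas])
  have ci: "pr M (\<lambda>\<omega>. (?XA \<omega>, ?XB \<omega>, R t \<omega>)) (x, y, z) * pr M (R t) z =
        pr M (\<lambda>\<omega>. (?XA \<omega>, R t \<omega>)) (x, z) * pr M (\<lambda>\<omega>. (?XB \<omega>, R t \<omega>)) (y, z)" for x y z
  proof -
    let ?SA = "{p \<in> space NP. restrict (\<lambda>c. pv p c) A = x}"
    let ?SB = "{p \<in> space NP. restrict (\<lambda>c. fv p c) B = y}"
    have g: "measure M {\<omega> \<in> space M. past \<omega> \<in> ?SA \<and> fut \<omega> \<in> ?SB \<and> R t \<omega> = z} *
          measure M {\<omega> \<in> space M. R t \<omega> = z} =
          measure M {\<omega> \<in> space M. past \<omega> \<in> ?SA \<and> R t \<omega> = z} *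
          measure M {\<omega> \<in> space M. fut \<omega> \<in> ?SB \<and> R t \<omega> = z}"
      using gen SA[of x] SB[of y] unfolding generator_condition_def Let_def past_def fut_def by blast
    have e1: "{\<omega> \<in> space M. past \<omega> \<in> ?SA \<and> fut \<omega> \<in> ?SB \<and> R t \<omega> = z} =
       {\<omega> \<in> space M. (?XA \<omega>, ?XB \<omega>, R t \<omega>) = (x, y, z)}"
      by (auto simp: hA hB NP_space)
    have e2: "{\<omega> \<in> space M. past \<omega> \<in> ?SA \<and> R t \<omega> = z} = {\<omega> \<in> space M. (?XA \<omega>, R t \<omega>) = (x, z)}"
      by (auto simp: hA NP_space)
    have e3: "{\<omega> \<in> space M. fut \<omega> \<in> ?SB \<and> R t \<omega> = z} = {\<omega> \<in> space M. (?XB \<omega>, R t \<omega>) = (y, z)}"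
      by (auto simp: hB NP_space)
    show ?thesis using g unfolding e1 e2 e3 pr_def by simp
  qed
  have "cond_mutual_info M ?XA ?XB (R t) = 0"
    by (rule cmi_zero[OF rep_sf[OF rep_R] ci])
  then show ?thesis
    using cmi_E[OF rep_restr[OF fA] rep_restr[OF fB] rep_R[of t]] by simp
qed

end



lemma lim_eq_diff:
  fixes a b :: "nat \<Rightarrow> real"
  assumes "convergent a" "convergent b" "(\<lambda>n. a n - b n) \<longlonglongrightarrow> 0"
  shows "lim a = lim b"
proof -
  have "(\<lambda>n. a n - b n) \<longlonglongrightarrow> lim a - lim b"
    using assms(1,2) by (intro tendsto_diff) (simp_all add: convergent_LIMSEQ_iff)
  then have "lim a - lim b = 0" using assms(3) LIMSEQ_unique by blast
  then show ?thesis by simp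
qed

lemma lim_add:
  fixes a b :: "nat \<Rightarrow> real"
  assumes "convergent a" "convergent b"
  shows "lim (\<lambda>n. a n + b n) = lim a + lim b" and "convergent (\<lambda>n. a n + b n)"
proof -
  have "(\<lambda>n. a n + b n) \<longlonglongrightarrow> lim a + lim b"
    using assms by (intro tendsto_add) (simp_all add: convergent_LIMSEQ_iff)
  then show "lim (\<lambda>n. a n + b n) = lim a + lim b" "convergent (\<lambda>n. a n + b n)"
    by (auto intro: limI simp: convergent_def)
qed

lemma conv_diff:
  fixes a b :: "nat \<Rightarrow> real"
  assumes "convergent a" "convergent b"
  shows "convergent (\<lambda>n. a n - b n)"
  using assms unfolding convergent_def by (blast intro: tendsto_diff)

lemma shift_lim:
  fixes c :: "nat \<Rightarrow> real"
  assumes "c \<longlonglongrightarrow> L"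
  shows "(\<lambda>n. c (n + k)) \<longlonglongrightarrow> L" and "(\<lambda>n. c (n - k)) \<longlonglongrightarrow> L"
proof -
  show "(\<lambda>n. c (n + k)) \<longlonglongrightarrow> L" using assms by (rule LIMSEQ_ignore_initial_segment)
  have "(\<lambda>n. c (n + k - k)) \<longlonglongrightarrow> L" using assms by simp
  then show "(\<lambda>n. c (n - k)) \<longlonglongrightarrow> L" by (rule LIMSEQ_offset)
qed

context gen_setting
begin

lemma CE_conv:
  assumes fA: "finite A" and fC: "\<And>n. finite (C n)" and mono: "\<And>n. C n \<subseteq> C (Suc n)"
  shows "convergent (\<lambda>n. EE (A \<union> C n) - EE (C n))"
proof -
  have "decseq (\<lambda>n. EE (A \<union> C n) - EE (C n))"
  proof (rule decseq_SucI)
    fix n show "EE (A \<union> C (Suc n)) - EE (C (Suc n)) \<le> EE (A \<union> C n) - EE (C n)"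
      by (rule CE_anti[OF fA fC mono])
  qed
  moreover have "\<forall>n. 0 \<le> EE (A \<union> C n) - EE (C n)" using CE_nonneg[OF fA fC] by blast
  ultimately obtain L where "(\<lambda>n. EE (A \<union> C n) - EE (C n)) \<longlonglongrightarrow> L" by (rule decseq_convergent)
  then show ?thesis by (auto simp: convergent_def)
qed

lemma shift_Inl: "shift j ` (Inl ` {x..y}) = Inl ` {x + int j..y + int j}"
proof -
  have e: "{x + int j..y + int j} = (\<lambda>i. i + int j) ` {x..y}" by simp
  show ?thesis unfolding e by (simp add: shift_def image_image del: image_add_atLeastAtMost image_add_atLeastAtMost')
qed

lemma stat_win:
  assumes st: "jointly_stationary M Y R"
  shows "EE (Inl ` {x + int j..y + int j}) = EE (Inl ` {x..y})"
  using EE_shift[OF st, of "Inl ` {x..y}" j] by (simp add: shift_Inl)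

lemma stat_rwin:
  assumes st: "jointly_stationary M Y R"
  shows "EE ({Inr (i + int j)} \<union> Inl ` {x + int j..y + int j}) = EE ({Inr i} \<union> Inl ` {x..y})"
proof -
  have "shift j ` ({Inr i} \<union> Inl ` {x..y}) = {Inr (i + int j)} \<union> Inl ` {x + int j..y + int j}"
    unfolding image_Un shift_Inl by (simp add: shift_def)
  then show ?thesis using EE_shift[OF st, of "{Inr i} \<union> Inl ` {x..y}" j] by simp
qed

lemma stat_r:
  assumes st: "jointly_stationary M Y R"
  shows "EE {Inr (i + int j)} = EE {Inr i}"
  using EE_shift[OF st, of "{Inr i}" j] by (simp add: shift_def)

definition uu :: "nat \<Rightarrow> real" where
  "uu m = EE ({Inr 0} \<union> Inl ` {- int m..0}) - EE (Inl ` {- int m..0})"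
definition cc :: "nat \<Rightarrow> real" where
  "cc m = EE ({Inr 0} \<union> Inl ` {- int m..int m}) - EE (Inl ` {- int m..int m})"
definition vv :: "nat \<Rightarrow> nat \<Rightarrow> real" where
  "vv k m = EE ({Inr 0} \<union> Inl ` {- int m - int k..int m - int k}) - EE (Inl ` {- int m - int k..int m - int k})"

lemma uu_conv: "convergent uu"
  unfolding uu_def by (rule CE_conv) auto

lemma cc_conv: "convergent cc"
  unfolding cc_def by (rule CE_conv) auto

lemma vv_lim: "(\<lambda>m. vv k m) \<longlonglongrightarrow> lim cc"
proof (rule tendsto_sandwich[where f="\<lambda>n. cc (n + k)" and h="\<lambda>n. cc (n - k)"])
  have cl: "cc \<longlonglongrightarrow> lim cc" using cc_conv by (simp add: convergent_LIMSEQ_iff)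
  show "(\<lambda>n. cc (n + k)) \<longlonglongrightarrow> lim cc" "(\<lambda>n. cc (n - k)) \<longlonglongrightarrow> lim cc"
    using shift_lim[OF cl] by auto
  show "\<forall>\<^sub>F n in sequentially. cc (n + k) \<le> vv k n"
  proof (rule always_eventually, rule allI)
    fix n
    have "Inl ` {- int n - int k..int n - int k} \<subseteq> (Inl ` {- int (n + k)..int (n + k)} :: (int + int) set)"
      by auto
    then show "cc (n + k) \<le> vv k n" unfolding cc_def vv_def by (intro CE_anti) auto
  qed
  show "\<forall>\<^sub>F n in sequentially. vv k n \<le> cc (n - k)"
    unfolding eventually_sequentially
  proof (intro exI allI impI)
    fix n assume "k \<le> n"
    then have "Inl ` {- int (n - k)..int (n - k)} \<subseteq> (Inl ` {- int n - int k..int n - int k} :: (int + int) set)"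
      by auto
    then show "vv k n \<le> cc (n - k)" unfolding cc_def vv_def by (intro CE_anti) auto
  qed
qed

lemma part_i:
  assumes st: "jointly_stationary M Y R"
  shows "lim (\<lambda>n. cond_entropy M (R 0) (\<lambda>\<omega>. (R (int k) \<omega>, window Y (- int n) (int n) \<omega>)))
       = lim (\<lambda>n. cond_entropy M (R (int k)) (\<lambda>\<omega>. (R 0 \<omega>, window Y (- int n) (int n) \<omega>)))"
proof -
  let ?W = "\<lambda>n. Inl ` {- int n..int n} :: (int + int) set"
  have ea: "cond_entropy M (R 0) (\<lambda>\<omega>. (R (int k) \<omega>, window Y (- int n) (int n) \<omega>)) =
      EE ({Inr 0} \<union> ({Inr (int k)} \<union> ?W n)) - EE ({Inr (int k)} \<union> ?W n)" for n
    by (rule ce_E[OF rep_R rep_pair[OF rep_R rep_window]])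
  have eb: "cond_entropy M (R (int k)) (\<lambda>\<omega>. (R 0 \<omega>, window Y (- int n) (int n) \<omega>)) =
      EE ({Inr (int k)} \<union> ({Inr 0} \<union> ?W n)) - EE ({Inr 0} \<union> ?W n)" for n
    by (rule ce_E[OF rep_R rep_pair[OF rep_R rep_window]])
  have ca: "convergent (\<lambda>n. EE ({Inr 0} \<union> ({Inr (int k)} \<union> ?W n)) - EE ({Inr (int k)} \<union> ?W n))"
    by (rule CE_conv) auto
  have cb: "convergent (\<lambda>n. EE ({Inr (int k)} \<union> ({Inr 0} \<union> ?W n)) - EE ({Inr 0} \<union> ?W n))"
    by (rule CE_conv) auto
  have d: "(EE ({Inr 0} \<union> ({Inr (int k)} \<union> ?W n)) - EE ({Inr (int k)} \<union> ?W n)) -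
     (EE ({Inr (int k)} \<union> ({Inr 0} \<union> ?W n)) - EE ({Inr 0} \<union> ?W n)) = cc n - vv k n" for n
  proof -
    have s1: "EE ({Inr (int k)} \<union> ?W n) = EE ({Inr 0} \<union> Inl ` {- int n - int k..int n - int k})"
      using stat_rwin[OF st, of 0 k "- int n - int k" "int n - int k"] by simp
    have s2: "EE (?W n) = EE (Inl ` {- int n - int k..int n - int k})"
      using stat_win[OF st, of "- int n - int k" k "int n - int k"] by simp
    show ?thesis unfolding cc_def vv_def s1[symmetric] s2[symmetric] by (simp add: Un_ac insert_commute)
  qed
  have "(\<lambda>n. cc n - vv k n) \<longlonglongrightarrow> lim cc - lim cc"
    using cc_conv vv_lim by (intro tendsto_diff) (simp_all add: convergent_LIMSEQ_iff)
  then have "(\<lambda>n. (EE ({Inr 0} \<union> ({Inr (int k)} \<union> ?W n)) - EE ({Inr (int k)} \<union> ?W n)) -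
     (EE ({Inr (int k)} \<union> ({Inr 0} \<union> ?W n)) - EE ({Inr 0} \<union> ?W n))) \<longlonglongrightarrow> 0"
    unfolding d by simp
  then show ?thesis unfolding ea eb by (rule lim_eq_diff[OF ca cb])
qed

end



context gen_setting
begin

lemma core_ii:
  assumes fin: "finite a" "finite b" "finite P" "finite F" "finite H"
    and CI: "EE ((a \<union> (P \<union> F)) \<union> b) + EE (H \<union> b) = EE ((a \<union> (P \<union> F)) \<union> (H \<union> b)) + EE b"
  shows "(EE (b \<union> (a \<union> (P \<union> F))) + EE ((F \<union> H) \<union> (a \<union> (P \<union> F))) - EE (b \<union> ((F \<union> H) \<union> (a \<union> (P \<union> F)))) - EE (a \<union> (P \<union> F)))
  - (((EE (a \<union> P) + EE (b \<union> P) - EE (a \<union> (b \<union> P)) - EE P) - (EE (a \<union> (F \<union> P)) + EE (b \<union> (F \<union> P)) - EE (a \<union> (b \<union> (F \<union> P))) - EE (F \<union> P)))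
     + (EE (a \<union> (P \<union> b)) + EE (F \<union> (P \<union> b)) - EE (a \<union> (F \<union> (P \<union> b))) - EE (P \<union> b))
     + (EE (a \<union> (P \<union> (F \<union> b))) + EE ((F \<union> H) \<union> (P \<union> (F \<union> b))) - EE (a \<union> ((F \<union> H) \<union> (P \<union> (F \<union> b)))) - EE (P \<union> (F \<union> b))))
  = ((EE (b \<union> (P \<union> F)) - EE (P \<union> F)) - (EE (b \<union> ((P \<union> F) \<union> H)) - EE ((P \<union> F) \<union> H)))
    - ((EE (a \<union> P) - EE P) - (EE (a \<union> (P \<union> (F \<union> H))) - EE (P \<union> (F \<union> H))))"
proof -
  have s1: "EE ((P \<union> F) \<union> (H \<union> b)) + EE b \<le> EE ((P \<union> F) \<union> b) + EE (H \<union> b)"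
    using EE_submod[of "P \<union> F" H b] fin by simp
  have s2: "EE (a \<union> (H \<union> (P \<union> F \<union> b))) + EE (P \<union> F \<union> b) \<le> EE (a \<union> (P \<union> F \<union> b)) + EE (H \<union> (P \<union> F \<union> b))"
    using EE_submod[of a H "P \<union> F \<union> b"] fin by simp
  show ?thesis using s1 s2 CI by (simp only: Un_ac)
qed

lemma core_iii:
  assumes fin: "finite a" "finite b" "finite P" "finite F" "finite H"
    and CIk: "EE ((a \<union> (P \<union> F)) \<union> b) + EE (H \<union> b) = EE ((a \<union> (P \<union> F)) \<union> (H \<union> b)) + EE b"
    and CI0: "EE (P \<union> a) + EE ((b \<union> F) \<union> a) = EE (P \<union> ((b \<union> F) \<union> a)) + EE a"
  shows "(EE (P \<union> (b \<union> (F \<union> H))) + EE (a \<union> (b \<union> (F \<union> H))) - EE (P \<union> (a \<union> (b \<union> (F \<union> H)))) - EE (b \<union> (F \<union> H)))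
    + ((EE (P \<union> b) + EE (a \<union> b) - EE (P \<union> (a \<union> b)) - EE b) - (EE (P \<union> (F \<union> b)) + EE (a \<union> (F \<union> b)) - EE (P \<union> (a \<union> (F \<union> b))) - EE (F \<union> b)))
    - (((EE (a \<union> P) + EE (b \<union> P) - EE (a \<union> (b \<union> P)) - EE P) - (EE (a \<union> (F \<union> P)) + EE (b \<union> (F \<union> P)) - EE (a \<union> (b \<union> (F \<union> P))) - EE (F \<union> P)))
      + (EE (b \<union> (a \<union> P)) + EE (F \<union> (a \<union> P)) - EE (b \<union> (F \<union> (a \<union> P))) - EE (a \<union> P)))
   = (EE P - EE (a \<union> P)) - (EE (P \<union> F) - EE (b \<union> (P \<union> F))) + (EE a - EE b)"
proof -
  have s1: "EE (F \<union> (H \<union> b)) + EE b \<le> EE (F \<union> b) + EE (H \<union> b)"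
    using EE_submod[of F H b] fin by simp
  have s2: "EE (a \<union> (H \<union> (b \<union> F))) + EE (b \<union> F) \<le> EE (a \<union> (b \<union> F)) + EE (H \<union> (b \<union> F))"
    using EE_submod[of a H "b \<union> F"] fin by simp
  have s3: "EE (P \<union> (H \<union> (a \<union> b \<union> F))) + EE (a \<union> b \<union> F) \<le> EE (P \<union> (a \<union> b \<union> F)) + EE (H \<union> (a \<union> b \<union> F))"
    using EE_submod[of P H "a \<union> b \<union> F"] fin by simp
  have s4: "EE (a \<union> (H \<union> (b \<union> F \<union> P))) + EE (b \<union> F \<union> P) \<le> EE (a \<union> (b \<union> F \<union> P)) + EE (H \<union> (b \<union> F \<union> P))"
    using EE_submod[of a H "b \<union> F \<union> P"] fin by simp
  have s5: "EE (P \<union> (H \<union> (b \<union> F))) + EE (b \<union> F) \<le> EE (P \<union> (b \<union> F)) + EE (H \<union> (b \<union> F))"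
    using EE_submod[of P H "b \<union> F"] fin by simp
  have s6: "EE (P \<union> (b \<union> a)) + EE a \<le> EE (P \<union> a) + EE (b \<union> a)"
    using EE_submod[of P b a] fin by simp
  have s7: "EE (P \<union> (F \<union> (a \<union> b))) + EE (a \<union> b) \<le> EE (P \<union> (a \<union> b)) + EE (F \<union> (a \<union> b))"
    using EE_submod[of P F "a \<union> b"] fin by simp
  show ?thesis using s1 s2 s3 s4 s5 s6 s7 CIk CI0 by (simp only: Un_ac)
qed

end



context gen_setting
begin

lemma CMI_conv:
  assumes "finite A" "\<And>n. finite (B n)" "\<And>n. finite (C n)" "\<And>n. C n \<subseteq> C (Suc n)"
    "\<And>n. B n \<union> C n \<subseteq> B (Suc n) \<union> C (Suc n)"
  shows "convergent (\<lambda>n. EE (A \<union> C n) + EE (B n \<union> C n) - EE (A \<union> (B n \<union> C n)) - EE (C n))"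
proof -
  have "convergent (\<lambda>n. (EE (A \<union> C n) - EE (C n)) - (EE (A \<union> (B n \<union> C n)) - EE (B n \<union> C n)))"
    by (rule conv_diff; rule CE_conv) (use assms in auto)
  then show ?thesis by (simp add: algebra_simps)
qed

lemma part_ii:
  assumes st: "jointly_stationary M Y R" and gen: "generator_condition M Y R" and k1: "1 \<le> k"
  shows "lim (\<lambda>n. cond_mutual_info3 M (R 0) (R (int k)) (window Y 1 (int k)) (window Y (- int n) 0))
     + lim (\<lambda>n. cond_mutual_info M (R 0) (window Y 1 (int k))
                 (\<lambda>\<omega>. (window Y (- int n) 0 \<omega>, R (int k) \<omega>)))
     + lim (\<lambda>n. cond_mutual_info M (R 0) (window Y 1 (int n))
                 (\<lambda>\<omega>. (window Y (- int n) 0 \<omega>, window Y 1 (int k) \<omega>, R (int k) \<omega>)))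
       = lim (\<lambda>n. cond_mutual_info M (R (int k)) (window Y 1 (int n))
                 (\<lambda>\<omega>. (R 0 \<omega>, window Y (- int n) 0 \<omega>, window Y 1 (int k) \<omega>)))"
proof -
  define a where "a = {Inr 0 :: int + int}"
  define b where "b = {Inr (int k) :: int + int}"
  define P where "P n = (Inl ` {- int n..0} :: (int + int) set)" for n
  define F where "F = (Inl ` {1..int k} :: (int + int) set)"
  define G where "G n = (Inl ` {1..int n} :: (int + int) set)" for n
  define H where "H n = (Inl ` {int k + 1..int n} :: (int + int) set)" for n
  have rA: "rep (R 0) a" unfolding a_def by (rule rep_R)
  have rB: "rep (R (int k)) b" unfolding b_def by (rule rep_R)
  have rP: "rep (window Y (- int n) 0) (P n)" for n unfolding P_def by (rule rep_window)
  have rF: "rep (window Y 1 (int k)) F" unfolding F_def by (rule rep_window)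
  have rG: "rep (window Y 1 (int n)) (G n)" for n unfolding G_def by (rule rep_window)
  have fin: "finite a" "finite b" "finite (P n)" "finite F" "finite (G n)" "finite (H n)" for n
    unfolding a_def b_def P_def F_def G_def H_def by auto
  define t1 where "t1 n = (EE (a \<union> P n) + EE (b \<union> P n) - EE (a \<union> (b \<union> P n)) - EE (P n))
     - (EE (a \<union> (F \<union> P n)) + EE (b \<union> (F \<union> P n)) - EE (a \<union> (b \<union> (F \<union> P n))) - EE (F \<union> P n))" for n
  define t2 where "t2 n = EE (a \<union> (P n \<union> b)) + EE (F \<union> (P n \<union> b)) - EE (a \<union> (F \<union> (P n \<union> b))) - EE (P n \<union> b)" for n
  define t3 where "t3 n = EE (a \<union> (P n \<union> (F \<union> b))) + EE (G n \<union> (P n \<union> (F \<union> b))) - EE (a \<union> (G n \<union> (P n \<union> (F \<union> b)))) - EE (P n \<union> (F \<union> b))" for n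
  define t4 where "t4 n = EE (b \<union> (a \<union> (P n \<union> F))) + EE (G n \<union> (a \<union> (P n \<union> F))) - EE (b \<union> (G n \<union> (a \<union> (P n \<union> F)))) - EE (a \<union> (P n \<union> F))" for n
  have e1: "(\<lambda>n. cond_mutual_info3 M (R 0) (R (int k)) (window Y 1 (int k)) (window Y (- int n) 0)) = t1"
    unfolding cond_mutual_info3_def t1_def
    by (intro ext, subst cmi_E[OF rA rB rP], subst cmi_E[OF rA rB rep_pair[OF rF rP]]) (rule refl)
  have e2: "(\<lambda>n. cond_mutual_info M (R 0) (window Y 1 (int k)) (\<lambda>\<omega>. (window Y (- int n) 0 \<omega>, R (int k) \<omega>))) = t2"
    unfolding t2_def by (intro ext, rule cmi_E[OF rA rF rep_pair[OF rP rB]])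
  have e3: "(\<lambda>n. cond_mutual_info M (R 0) (window Y 1 (int n))
                 (\<lambda>\<omega>. (window Y (- int n) 0 \<omega>, window Y 1 (int k) \<omega>, R (int k) \<omega>))) = t3"
    unfolding t3_def by (intro ext, rule cmi_E[OF rA rG rep_pair[OF rP rep_pair[OF rF rB]]])
  have e4: "(\<lambda>n. cond_mutual_info M (R (int k)) (window Y 1 (int n))
                 (\<lambda>\<omega>. (R 0 \<omega>, window Y (- int n) 0 \<omega>, window Y 1 (int k) \<omega>))) = t4"
    unfolding t4_def by (intro ext, rule cmi_E[OF rB rG rep_pair[OF rA rep_pair[OF rP rF]]])
  have Pmono: "P n \<subseteq> P (Suc n)" for n unfolding P_def by auto
  have Gmono: "G n \<subseteq> G (Suc n)" for n unfolding G_def by auto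
  have c1: "convergent t1" unfolding t1_def
    by (rule conv_diff; rule CMI_conv) (use fin in \<open>auto dest: Pmono[THEN subsetD]\<close>)
  have c2: "convergent t2" unfolding t2_def
    by (rule CMI_conv) (use fin in \<open>auto dest: Pmono[THEN subsetD]\<close>)
  have c3: "convergent t3" unfolding t3_def
    by (rule CMI_conv) (use fin in \<open>auto dest: Pmono[THEN subsetD] Gmono[THEN subsetD]\<close>)
  have c4: "convergent t4" unfolding t4_def
    by (rule CMI_conv) (use fin in \<open>auto dest: Pmono[THEN subsetD] Gmono[THEN subsetD]\<close>)
  have ev: "t4 n - (t1 n + t2 n + t3 n) = uu (n + k) - vv k n - uu n + cc n" if nk: "k \<le> n" for n
  proof -
    have GFH: "G n = F \<union> H n" unfolding G_def F_def H_def image_Un[symmetric]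
      by (intro arg_cong[where f="image Inl"]) (use nk in auto)
    have CI: "EE ((a \<union> (P n \<union> F)) \<union> b) + EE (H n \<union> b) = EE ((a \<union> (P n \<union> F)) \<union> (H n \<union> b)) + EE b"
      unfolding b_def
    proof (rule gen_CI[OF gen])
      show "finite (a \<union> (P n \<union> F))" "finite (H n)" using fin by auto
      fix c assume "c \<in> a \<union> (P n \<union> F)"
      then show "case c of Inl i \<Rightarrow> i \<le> int k | Inr i \<Rightarrow> i < int k"
        unfolding a_def P_def F_def using k1 by auto
    next
      fix c assume "c \<in> H n"
      then show "case c of Inl i \<Rightarrow> int k < i | Inr i \<Rightarrow> int k < i"
        unfolding H_def by auto
    qed
    have core: "t4 n - (t1 n + t2 n + t3 n) =
      ((EE (b \<union> (P n \<union> F)) - EE (P n \<union> F)) - (EE (b \<union> ((P n \<union> F) \<union> H n)) - EE ((P n \<union> F) \<union> H n)))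
    - ((EE (a \<union> P n) - EE (P n)) - (EE (a \<union> (P n \<union> (F \<union> H n))) - EE (P n \<union> (F \<union> H n))))"
      unfolding t1_def t2_def t3_def t4_def GFH
      by (rule core_ii[OF fin(1,2,3,4,6) CI])
    have w1: "P n \<union> F = Inl ` {- int n..int k}" unfolding P_def F_def image_Un[symmetric]
      by (intro arg_cong[where f="image Inl"]) auto
    have w2: "(P n \<union> F) \<union> H n = Inl ` {- int n..int n}" unfolding P_def F_def H_def image_Un[symmetric]
      by (intro arg_cong[where f="image Inl"]) (use nk in auto)
    have w3: "P n \<union> (F \<union> H n) = Inl ` {- int n..int n}" unfolding P_def F_def H_def image_Un[symmetric]
      by (intro arg_cong[where f="image Inl"]) (use nk in auto)
    have s1: "EE (b \<union> Inl ` {- int n..int k}) = EE ({Inr 0} \<union> Inl ` {- int (n + k)..0})"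
      using stat_rwin[OF st, of 0 k "- int (n + k)" 0] unfolding b_def by simp
    have s2: "EE (Inl ` {- int n..int k}) = EE (Inl ` {- int (n + k)..0})"
      using stat_win[OF st, of "- int (n + k)" k 0] by simp
    have s3: "EE (b \<union> Inl ` {- int n..int n}) = EE ({Inr 0} \<union> Inl ` {- int n - int k..int n - int k})"
      using stat_rwin[OF st, of 0 k "- int n - int k" "int n - int k"] unfolding b_def by simp
    have s4: "EE (Inl ` {- int n..int n}) = EE (Inl ` {- int n - int k..int n - int k})"
      using stat_win[OF st, of "- int n - int k" k "int n - int k"] by simp
    show ?thesis unfolding core unfolding w2 w3 unfolding w1 unfolding s1 s2 s3 s4
      unfolding uu_def vv_def cc_def a_def P_def by (simp add: s4)
  qed
  have Lu: "uu \<longlonglongrightarrow> lim uu" using uu_conv by (simp add: convergent_LIMSEQ_iff)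
  have Lc: "cc \<longlonglongrightarrow> lim cc" using cc_conv by (simp add: convergent_LIMSEQ_iff)
  have "(\<lambda>n. uu (n + k) - vv k n - uu n + cc n) \<longlonglongrightarrow> lim uu - lim cc - lim uu + lim cc"
    by (intro tendsto_add tendsto_diff shift_lim(1)[OF Lu] vv_lim Lu Lc)
  then have "(\<lambda>n. uu (n + k) - vv k n - uu n + cc n) \<longlonglongrightarrow> 0" by simp
  then have "(\<lambda>n. t4 n - (t1 n + t2 n + t3 n)) \<longlonglongrightarrow> 0"
    by (rule Lim_transform_eventually) (unfold eventually_sequentially, use ev in \<open>metis\<close>)
  then have "(\<lambda>n. (t1 n + t2 n + t3 n) - t4 n) \<longlonglongrightarrow> 0"
    using tendsto_minus by fastforce
  have c123: "convergent (\<lambda>n. t1 n + t2 n + t3 n)"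
    using lim_add(2)[OF lim_add(2)[OF c1 c2] c3] .
  have "lim (\<lambda>n. t1 n + t2 n + t3 n) = lim t4"
    by (rule lim_eq_diff[OF c123 c4]) fact
  moreover have "lim (\<lambda>n. t1 n + t2 n + t3 n) = lim t1 + lim t2 + lim t3"
    using lim_add(1)[OF lim_add(2)[OF c1 c2] c3] lim_add(1)[OF c1 c2] by simp
  ultimately show ?thesis unfolding e1 e2 e3 e4 by simp
qed

end



context gen_setting
begin

lemma part_iii:
  assumes st: "jointly_stationary M Y R" and gen: "generator_condition M Y R" and k1: "1 \<le> k"
  shows "lim (\<lambda>n. cond_mutual_info M (window Y (- int n) 0) (R 0)
                 (\<lambda>\<omega>. (R (int k) \<omega>, window Y 1 (int n) \<omega>)))
     + lim (\<lambda>n. cond_mutual_info3 M (window Y (- int n) 0) (R 0) (window Y 1 (int k)) (R (int k)))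
       = lim (\<lambda>n. cond_mutual_info3 M (R 0) (R (int k)) (window Y 1 (int k)) (window Y (- int n) 0))
       + lim (\<lambda>n. cond_mutual_info M (R (int k)) (window Y 1 (int k))
                 (\<lambda>\<omega>. (R 0 \<omega>, window Y (- int n) 0 \<omega>)))"
proof -
  define a where "a = {Inr 0 :: int + int}"
  define b where "b = {Inr (int k) :: int + int}"
  define P where "P n = (Inl ` {- int n..0} :: (int + int) set)" for n
  define F where "F = (Inl ` {1..int k} :: (int + int) set)"
  define G where "G n = (Inl ` {1..int n} :: (int + int) set)" for n
  define H where "H n = (Inl ` {int k + 1..int n} :: (int + int) set)" for n
  have rA: "rep (R 0) a" unfolding a_def by (rule rep_R)
  have rB: "rep (R (int k)) b" unfolding b_def by (rule rep_R)
  have rP: "rep (window Y (- int n) 0) (P n)" for n unfolding P_def by (rule rep_window)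
  have rF: "rep (window Y 1 (int k)) F" unfolding F_def by (rule rep_window)
  have rG: "rep (window Y 1 (int n)) (G n)" for n unfolding G_def by (rule rep_window)
  have fin: "finite a" "finite b" "finite (P n)" "finite F" "finite (G n)" "finite (H n)" for n
    unfolding a_def b_def P_def F_def G_def H_def by auto
  define t1 where "t1 n = (EE (a \<union> P n) + EE (b \<union> P n) - EE (a \<union> (b \<union> P n)) - EE (P n))
     - (EE (a \<union> (F \<union> P n)) + EE (b \<union> (F \<union> P n)) - EE (a \<union> (b \<union> (F \<union> P n))) - EE (F \<union> P n))" for n
  define s1 where "s1 n = EE (P n \<union> (b \<union> G n)) + EE (a \<union> (b \<union> G n)) - EE (P n \<union> (a \<union> (b \<union> G n))) - EE (b \<union> G n)" for n
  define s2 where "s2 n = (EE (P n \<union> b) + EE (a \<union> b) - EE (P n \<union> (a \<union> b)) - EE b)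
     - (EE (P n \<union> (F \<union> b)) + EE (a \<union> (F \<union> b)) - EE (P n \<union> (a \<union> (F \<union> b))) - EE (F \<union> b))" for n
  define s4 where "s4 n = EE (b \<union> (a \<union> P n)) + EE (F \<union> (a \<union> P n)) - EE (b \<union> (F \<union> (a \<union> P n))) - EE (a \<union> P n)" for n
  have e1: "(\<lambda>n. cond_mutual_info3 M (R 0) (R (int k)) (window Y 1 (int k)) (window Y (- int n) 0)) = t1"
    unfolding cond_mutual_info3_def t1_def
    by (intro ext, subst cmi_E[OF rA rB rP], subst cmi_E[OF rA rB rep_pair[OF rF rP]]) (rule refl)
  have e5: "(\<lambda>n. cond_mutual_info M (window Y (- int n) 0) (R 0)
                 (\<lambda>\<omega>. (R (int k) \<omega>, window Y 1 (int n) \<omega>))) = s1"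
    unfolding s1_def by (intro ext, rule cmi_E[OF rP rA rep_pair[OF rB rG]])
  have e6: "(\<lambda>n. cond_mutual_info3 M (window Y (- int n) 0) (R 0) (window Y 1 (int k)) (R (int k))) = s2"
    unfolding cond_mutual_info3_def s2_def
    by (intro ext, subst cmi_E[OF rP rA rB], subst cmi_E[OF rP rA rep_pair[OF rF rB]]) (rule refl)
  have e7: "(\<lambda>n. cond_mutual_info M (R (int k)) (window Y 1 (int k))
                 (\<lambda>\<omega>. (R 0 \<omega>, window Y (- int n) 0 \<omega>))) = s4"
    unfolding s4_def by (intro ext, rule cmi_E[OF rB rF rep_pair[OF rA rP]])
  have Pmono: "P n \<subseteq> P (Suc n)" for n unfolding P_def by auto
  have Gmono: "G n \<subseteq> G (Suc n)" for n unfolding G_def by auto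
  have c1: "convergent t1" unfolding t1_def
    by (rule conv_diff; rule CMI_conv) (use fin in \<open>auto dest: Pmono[THEN subsetD]\<close>)
  have c4: "convergent s4" unfolding s4_def
    by (rule CMI_conv) (use fin in \<open>auto dest: Pmono[THEN subsetD]\<close>)
  have c5: "convergent s1"
  proof -
    have "convergent (\<lambda>n. EE (a \<union> (b \<union> G n)) + EE (P n \<union> (b \<union> G n)) - EE (a \<union> (P n \<union> (b \<union> G n))) - EE (b \<union> G n))"
      by (rule CMI_conv) (use fin in \<open>auto dest: Pmono[THEN subsetD] Gmono[THEN subsetD]\<close>)
    moreover have "s1 = (\<lambda>n. EE (a \<union> (b \<union> G n)) + EE (P n \<union> (b \<union> G n)) - EE (a \<union> (P n \<union> (b \<union> G n))) - EE (b \<union> G n))"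
      by (simp add: fun_eq_iff s1_def Un_left_commute)
    ultimately show ?thesis by simp
  qed
  have c6: "convergent s2"
  proof -
    have "convergent (\<lambda>n. (EE (a \<union> b) + EE (P n \<union> b) - EE (a \<union> (P n \<union> b)) - EE b)
     - (EE (a \<union> (F \<union> b)) + EE (P n \<union> (F \<union> b)) - EE (a \<union> (P n \<union> (F \<union> b))) - EE (F \<union> b)))"
      by (rule conv_diff; rule CMI_conv) (use fin in \<open>auto dest: Pmono[THEN subsetD]\<close>)
    moreover have "s2 = (\<lambda>n. (EE (a \<union> b) + EE (P n \<union> b) - EE (a \<union> (P n \<union> b)) - EE b)
     - (EE (a \<union> (F \<union> b)) + EE (P n \<union> (F \<union> b)) - EE (a \<union> (P n \<union> (F \<union> b))) - EE (F \<union> b)))"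
      by (simp add: fun_eq_iff s2_def Un_left_commute)
    ultimately show ?thesis by simp
  qed
  have ev: "(s1 n + s2 n) - (t1 n + s4 n) = uu (n + k) - uu n" if nk: "k \<le> n" for n
  proof -
    have GFH: "G n = F \<union> H n" unfolding G_def F_def H_def image_Un[symmetric]
      by (intro arg_cong[where f="image Inl"]) (use nk in auto)
    have CIk: "EE ((a \<union> (P n \<union> F)) \<union> b) + EE (H n \<union> b) = EE ((a \<union> (P n \<union> F)) \<union> (H n \<union> b)) + EE b"
      unfolding b_def
    proof (rule gen_CI[OF gen])
      show "finite (a \<union> (P n \<union> F))" "finite (H n)" using fin by auto
      fix c assume "c \<in> a \<union> (P n \<union> F)"
      then show "case c of Inl i \<Rightarrow> i \<le> int k | Inr i \<Rightarrow> i < int k"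
        unfolding a_def P_def F_def using k1 by auto
    next
      fix c assume "c \<in> H n"
      then show "case c of Inl i \<Rightarrow> int k < i | Inr i \<Rightarrow> int k < i"
        unfolding H_def by auto
    qed
    have CI0: "EE (P n \<union> a) + EE ((b \<union> F) \<union> a) = EE (P n \<union> ((b \<union> F) \<union> a)) + EE a"
      unfolding a_def
    proof (rule gen_CI[OF gen])
      show "finite (P n)" "finite (b \<union> F)" using fin by auto
      fix c assume "c \<in> P n"
      then show "case c of Inl i \<Rightarrow> i \<le> 0 | Inr i \<Rightarrow> i < 0"
        unfolding P_def by auto
    next
      fix c assume "c \<in> b \<union> F"
      then show "case c of Inl i \<Rightarrow> 0 < i | Inr i \<Rightarrow> 0 < i"
        unfolding b_def F_def using k1 by auto
    qed
    have core: "(s1 n + s2 n) - (t1 n + s4 n) =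
       (EE (P n) - EE (a \<union> P n)) - (EE (P n \<union> F) - EE (b \<union> (P n \<union> F))) + (EE a - EE b)"
      unfolding s1_def s2_def t1_def s4_def GFH
      by (rule core_iii[OF fin(1,2,3,4,6) CIk CI0])
    have w1: "P n \<union> F = Inl ` {- int n..int k}" unfolding P_def F_def image_Un[symmetric]
      by (intro arg_cong[where f="image Inl"]) auto
    have s1: "EE (b \<union> Inl ` {- int n..int k}) = EE ({Inr 0} \<union> Inl ` {- int (n + k)..0})"
      using stat_rwin[OF st, of 0 k "- int (n + k)" 0] unfolding b_def by simp
    have s2: "EE (Inl ` {- int n..int k}) = EE (Inl ` {- int (n + k)..0})"
      using stat_win[OF st, of "- int (n + k)" k 0] by simp
    have s3: "EE b = EE a"
      using stat_r[OF st, of 0 k] unfolding a_def b_def by simp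
    show ?thesis unfolding core unfolding w1 s1 s2 s3
      unfolding uu_def a_def P_def by simp
  qed
  have Lu: "uu \<longlonglongrightarrow> lim uu" using uu_conv by (simp add: convergent_LIMSEQ_iff)
  have "(\<lambda>n. uu (n + k) - uu n) \<longlonglongrightarrow> lim uu - lim uu"
    by (intro tendsto_diff shift_lim(1)[OF Lu] Lu)
  then have "(\<lambda>n. uu (n + k) - uu n) \<longlonglongrightarrow> 0" by simp
  then have lim0: "(\<lambda>n. (s1 n + s2 n) - (t1 n + s4 n)) \<longlonglongrightarrow> 0"
    by (rule Lim_transform_eventually) (unfold eventually_sequentially, use ev in \<open>metis\<close>)
  have "lim (\<lambda>n. s1 n + s2 n) = lim (\<lambda>n. t1 n + s4 n)"
    by (rule lim_eq_diff[OF lim_add(2)[OF c5 c6] lim_add(2)[OF c1 c4] lim0])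
  then show ?thesis unfolding e1 e5 e6 e7 lim_add(1)[OF c5 c6] lim_add(1)[OF c1 c4] .
qed

end

theorem mainTheorem7:
  fixes M :: "'a measure"
    and Y :: "int \<Rightarrow> 'a \<Rightarrow> 'y::finite"
    and R :: "int \<Rightarrow> 'a \<Rightarrow> 'r::finite"
    and k :: nat
  assumes "prob_space M"
    and "\<And>t. Y t \<in> measurable M (count_space UNIV)"
    and "\<And>t. R t \<in> measurable M (count_space UNIV)"
    and "jointly_stationary M Y R"
    and "generator_condition M Y R"
    and "k \<ge> 1"
  shows
    "(lim (\<lambda>n. cond_entropy M (R 0) (\<lambda>\<omega>. (R (int k) \<omega>, window Y (- int n) (int n) \<omega>)))
       = lim (\<lambda>n. cond_entropy M (R (int k)) (\<lambda>\<omega>. (R 0 \<omega>, window Y (- int n) (int n) \<omega>))))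
    \<and>
    (lim (\<lambda>n. cond_mutual_info3 M (R 0) (R (int k)) (window Y 1 (int k)) (window Y (- int n) 0))
     + lim (\<lambda>n. cond_mutual_info M (R 0) (window Y 1 (int k))
                 (\<lambda>\<omega>. (window Y (- int n) 0 \<omega>, R (int k) \<omega>)))
     + lim (\<lambda>n. cond_mutual_info M (R 0) (window Y 1 (int n))
                 (\<lambda>\<omega>. (window Y (- int n) 0 \<omega>, window Y 1 (int k) \<omega>, R (int k) \<omega>)))
       = lim (\<lambda>n. cond_mutual_info M (R (int k)) (window Y 1 (int n))
                 (\<lambda>\<omega>. (R 0 \<omega>, window Y (- int n) 0 \<omega>, window Y 1 (int k) \<omega>))))
    \<and>
    (lim (\<lambda>n. cond_mutual_info M (window Y (- int n) 0) (R 0)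
                 (\<lambda>\<omega>. (R (int k) \<omega>, window Y 1 (int n) \<omega>)))
     + lim (\<lambda>n. cond_mutual_info3 M (window Y (- int n) 0) (R 0) (window Y 1 (int k)) (R (int k)))
       = lim (\<lambda>n. cond_mutual_info3 M (R 0) (R (int k)) (window Y 1 (int k)) (window Y (- int n) 0))
       + lim (\<lambda>n. cond_mutual_info M (R (int k)) (window Y 1 (int k))
                 (\<lambda>\<omega>. (R 0 \<omega>, window Y (- int n) 0 \<omega>))))"
  proof -
  interpret g: gen_setting M Y R
    using assms(1,2,3) by (simp add: gen_setting_def gen_setting_axioms_def)
  show ?thesis
    using g.part_i[OF assms(4)] g.part_ii[OF assms(4,5,6)] g.part_iii[OF assms(4,5,6)] by blast
qed

end
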